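(* Let $p\in[1,\infty]$, $d\in\mathbb N$, $m_0:=d$, $m_1\le m_2\le\cdots$ positive integers, $\mathbf W_n\in\mathbb R^{m_n\times m_{n-1}}$ and $\mathbf b_n\in\mathbb R^{m_n}$ for $n\in\mathbb N$. If $\mathbf W_n=\mathbf I_{m_n,m_{n-1}}+\mathbf P_n$ for all $n\ge1$ with $\sum_{n=1}^\infty\|\mathbf P_n\|_p<\infty$, and $\sum_{n=1}^\infty\|\mathbf b_n\|_p<\infty$, then the ReLU networks $\mathcal N_n$ converge pointwise on $[0,1]^d$, i.e. for each $x\in[0,1]^d$ the sequence $\tilde{\mathcal N}_n(x)$ converges in $\ell^p$.
   Context: $\sigma(t)=\max(t,0)$ applied componentwise; $\mathcal N_n(x):=\big(\sigma(\mathbf W_n\cdot+\mathbf b_n)\circ\cdots\circ\sigma(\mathbf W_1\cdot+\mathbf b_1)\big)(x)\in\mathbb R^{m_n}$ for $x\in[0,1]^d$, and $\tilde{\mathcal N}_n(x)\in\ell^p$ is the sequence whose first $m_n$ entries are those of $\mathcal N_n(x)$ and whose remaining entries are $0$. $\|\cdot\|_p$ denotes the $\ell^p$ norm on vectors and the induced operator norm on matrices. For $m'\ge m$, $\mathbf I_{m',m}$ is the $m'\times m$ matrix whose top $m\times m$ block is the identity and whose remaining entries are zero. *)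

theory Defs
  imports "HOL-Analysis.Analysis"
begin

(* Vectors (finite or in l^p) are represented as sequences nat => real;
   a vector of R^m is a sequence vanishing from index m on.
   Matrices are nat => nat => real (entry (i,j) = row i, column j). *)

definition lp_norm :: "ereal \<Rightarrow> (nat \<Rightarrow> real) \<Rightarrow> real" where
  "lp_norm p x = (if p = \<infinity> then (SUP i. \<bar>x i\<bar>)
     else (\<Sum>i. \<bar>x i\<bar> powr real_of_ereal p) powr (1 / real_of_ereal p))"

definition in_lp :: "ereal \<Rightarrow> (nat \<Rightarrow> real) \<Rightarrow> bool" where
  "in_lp p x = (if p = \<infinity> then bounded (range x)
     else summable (\<lambda>i. \<bar>x i\<bar> powr real_of_ereal p))"

definition matvec :: "nat \<Rightarrow> nat \<Rightarrow> (nat \<Rightarrow> nat \<Rightarrow> real) \<Rightarrow> (nat \<Rightarrow> real) \<Rightarrow> (nat \<Rightarrow> real)" where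
  "matvec m k W y = (\<lambda>i. if i < m then (\<Sum>j<k. W i j * y j) else 0)"

definition op_norm :: "ereal \<Rightarrow> nat \<Rightarrow> nat \<Rightarrow> (nat \<Rightarrow> nat \<Rightarrow> real) \<Rightarrow> real" where
  "op_norm p m k W = Sup {lp_norm p (matvec m k W y) | y. (\<forall>i\<ge>k. y i = 0) \<and> lp_norm p y \<le> 1}"

definition trunc :: "nat \<Rightarrow> (nat \<Rightarrow> real) \<Rightarrow> (nat \<Rightarrow> real)" where
  "trunc m v = (\<lambda>i. if i < m then v i else 0)"

definition relu_layer :: "nat \<Rightarrow> nat \<Rightarrow> (nat \<Rightarrow> nat \<Rightarrow> real) \<Rightarrow> (nat \<Rightarrow> real) \<Rightarrow> (nat \<Rightarrow> real) \<Rightarrow> (nat \<Rightarrow> real)" where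
  "relu_layer m k W b y = (\<lambda>i. if i < m then max ((\<Sum>j<k. W i j * y j) + b i) 0 else 0)"

(* net m W b x n = \<tilde>N_n(x) (zero-padded); net ... 0 = x *)
fun net :: "(nat \<Rightarrow> nat) \<Rightarrow> (nat \<Rightarrow> nat \<Rightarrow> nat \<Rightarrow> real) \<Rightarrow> (nat \<Rightarrow> nat \<Rightarrow> real) \<Rightarrow> (nat \<Rightarrow> real) \<Rightarrow> nat \<Rightarrow> (nat \<Rightarrow> real)" where
  "net m W b x 0 = x"
| "net m W b x (Suc n) = relu_layer (m (Suc n)) (m n) (W (Suc n)) (b (Suc n)) (net m W b x n)"

end

theory Submission
  imports Defs
begin


definition fs :: "nat \<Rightarrow> (nat \<Rightarrow> real) \<Rightarrow> bool" where
  "fs K z \<longleftrightarrow> (\<forall>i\<ge>K. z i = 0)"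

lemma fs_suminf:
  assumes "fs K z" "q > 0"
  shows "(\<Sum>i. \<bar>z i\<bar> powr q) = (\<Sum>i<K. \<bar>z i\<bar> powr q)"
  by (rule suminf_finite) (use assms in \<open>auto simp: fs_def\<close>)

lemma fs_summable:
  assumes "fs K z" "q > 0"
  shows "summable (\<lambda>i. \<bar>z i\<bar> powr q)"
  by (rule summable_finite[of "{..<K}"]) (use assms in \<open>auto simp: fs_def\<close>)

lemma convex_pow_nonneg:
  fixes q a b t :: real
  assumes q: "q \<ge> 1" and a: "a \<ge> 0" and b: "b \<ge> 0" and t: "0 \<le> t" "t \<le> 1"
  shows "(t * a + (1 - t) * b) powr q \<le> t * a powr q + (1 - t) * b powr q"
proof -
  have tp: "\<And>s::real. 0 \<le> s \<Longrightarrow> s \<le> 1 \<Longrightarrow> s powr q \<le> s"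
    using q powr_mono'[of 1 q] powr_one by (metis order_trans order_refl) 
  consider "a = 0" | "b = 0" | "a > 0" "b > 0" using a b by linarith
  then show ?thesis
  proof cases
    case 1
    have "((1-t) * b) powr q = (1-t) powr q * b powr q" using t b by (simp add: powr_mult)
    also have "\<dots> \<le> (1-t) * b powr q" using tp[of "1-t"] t by (intro mult_right_mono) auto
    finally show ?thesis using 1 q by simp
  next
    case 2
    have "(t * a) powr q = t powr q * a powr q" using t a by (simp add: powr_mult)
    also have "\<dots> \<le> t * a powr q" using tp[of "t"] t by (intro mult_right_mono) auto
    finally show ?thesis using 2 q by simp
  next
    case 3
    show ?thesis using convex_onD[OF powr_convex[OF q], of "1-t" a b] 3 t by auto
  qed
qed

definition Fq :: "real \<Rightarrow> (nat \<Rightarrow> real) \<Rightarrow> real" where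
  "Fq q z = (\<Sum>i. \<bar>z i\<bar> powr q) powr (1/q)"

lemma Fq_nonneg: "0 \<le> Fq q z" by (simp add: Fq_def)

lemma Fq_pow:
  assumes "fs K z" "q > 0"
  shows "Fq q z powr q = (\<Sum>i<K. \<bar>z i\<bar> powr q)"
  using assms by (simp add: Fq_def fs_suminf powr_powr sum_nonneg)

lemma Fq_alt:
  assumes "fs K z" "q > 0"
  shows "Fq q z = (\<Sum>i<K. \<bar>z i\<bar> powr q) powr (1/q)"
  using assms by (simp add: Fq_def fs_suminf)

lemma Fq_coord:
  assumes "fs K z" "q > 0"
  shows "\<bar>z i\<bar> \<le> Fq q z"
proof (cases "i < K")
  case True
  have "\<bar>z i\<bar> = (\<bar>z i\<bar> powr q) powr (1/q)" using assms by (simp add: powr_powr)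
  also have "\<dots> \<le> (\<Sum>i<K. \<bar>z i\<bar> powr q) powr (1/q)"
    using True assms by (intro powr_mono2) (auto intro: member_le_sum)
  finally show ?thesis using Fq_alt[OF assms] by simp
next
  case False then show ?thesis using assms by (simp add: fs_def Fq_nonneg)
qed

lemma Fq_mono:
  assumes "fs K v" "q > 0" "\<And>i. \<bar>u i\<bar> \<le> \<bar>v i\<bar>"
  shows "Fq q u \<le> Fq q v"
proof -
  have fu: "fs K u" unfolding fs_def
  proof (intro allI impI)
    fix i assume "K \<le> i"
    then have "\<bar>u i\<bar> \<le> 0" using assms(1) assms(3)[of i] by (simp add: fs_def)
    then show "u i = 0" by simp
  qed
  show ?thesis unfolding Fq_alt[OF fu assms(2)] Fq_alt[OF assms(1,2)]
    using assms by (intro powr_mono2 sum_mono) (auto simp: sum_nonneg)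
qed

lemma fs_scale: "fs K z \<Longrightarrow> fs K (\<lambda>i. c * z i)" by (simp add: fs_def)
lemma fs_add: "fs K u \<Longrightarrow> fs K v \<Longrightarrow> fs K (\<lambda>i. u i + v i)" by (simp add: fs_def)
lemma fs_diff: "fs K u \<Longrightarrow> fs K v \<Longrightarrow> fs K (\<lambda>i. u i - v i)" by (simp add: fs_def)
lemma fs_mono: "fs K u \<Longrightarrow> K \<le> L \<Longrightarrow> fs L u" by (simp add: fs_def)

lemma Fq_scale:
  assumes "fs K z" "q > 0"
  shows "Fq q (\<lambda>i. c * z i) = \<bar>c\<bar> * Fq q z"
proof -
  have "Fq q (\<lambda>i. c * z i) = (\<Sum>i<K. \<bar>c\<bar> powr q * \<bar>z i\<bar> powr q) powr (1/q)"
    unfolding Fq_alt[OF fs_scale[OF assms(1)] assms(2)] by (simp add: abs_mult powr_mult)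
  also have "\<dots> = (\<bar>c\<bar> powr q) powr (1/q) * (\<Sum>i<K. \<bar>z i\<bar> powr q) powr (1/q)"
    by (simp add: sum_distrib_left[symmetric] powr_mult sum_nonneg)
  also have "\<dots> = \<bar>c\<bar> * Fq q z" using assms by (simp add: powr_powr Fq_alt[OF assms])
  finally show ?thesis .
qed

lemma Fq_zero_imp:
  assumes "fs K z" "q > 0" "Fq q z = 0"
  shows "z i = 0"
  using Fq_coord[OF assms(1,2), of i] assms(3) by simp

lemma Fq_tri:
  assumes u: "fs K u" and v: "fs K v" and q: "q \<ge> 1"
  shows "Fq q (\<lambda>i. u i + v i) \<le> Fq q u + Fq q v"
proof -
  have q0: "q > 0" using q by simp
  define a where "a = Fq q u"
  define b where "b = Fq q v"
  consider "a = 0" | "b = 0" | "a > 0" "b > 0" using Fq_nonneg a_def b_def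
    by (metis less_eq_real_def)
  then show ?thesis
  proof cases
    case 1
    then have "\<And>i. u i = 0" using Fq_zero_imp[OF u q0] a_def by simp
    then show ?thesis using 1 a_def by simp
  next
    case 2
    then have "\<And>i. v i = 0" using Fq_zero_imp[OF v q0] b_def by simp
    then show ?thesis using 2 b_def by simp
  next
    case 3
    define t where "t = a / (a + b)"
    have t: "0 \<le> t" "t \<le> 1" "1 - t = b / (a + b)" using 3 by (auto simp: t_def field_simps)
    have sa: "(\<Sum>i<K. \<bar>u i\<bar> powr q) = a powr q" using Fq_pow[OF u q0] a_def by simp
    have sb: "(\<Sum>i<K. \<bar>v i\<bar> powr q) = b powr q" using Fq_pow[OF v q0] b_def by simp
    have key: "\<bar>u i + v i\<bar> powr q \<le> (a+b) powr q * (t * (\<bar>u i\<bar> powr q / a powr q) + (1-t) * (\<bar>v i\<bar> powr q / b powr q))" for i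
    proof -
      have "\<bar>u i + v i\<bar> powr q \<le> (\<bar>u i\<bar> + \<bar>v i\<bar>) powr q"
        using q0 by (intro powr_mono2) auto
      also have "\<bar>u i\<bar> + \<bar>v i\<bar> = (a+b) * (t * (\<bar>u i\<bar>/a) + (1-t) * (\<bar>v i\<bar>/b))"
      proof -
        have e1: "t * (\<bar>u i\<bar>/a) = \<bar>u i\<bar>/(a+b)" using 3 by (simp add: t_def)
        have e2: "(1-t) * (\<bar>v i\<bar>/b) = \<bar>v i\<bar>/(a+b)" using 3 t(3) by simp
        have "a + b \<noteq> 0" using 3 by simp
        then show ?thesis unfolding e1 e2 by (simp add: add_divide_distrib[symmetric])
      qed
      also have "((a+b) * (t * (\<bar>u i\<bar>/a) + (1-t) * (\<bar>v i\<bar>/b))) powr q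
          = (a+b) powr q * (t * (\<bar>u i\<bar>/a) + (1-t) * (\<bar>v i\<bar>/b)) powr q"
        by (rule powr_mult)
      also have "\<dots> \<le> (a+b) powr q * (t * (\<bar>u i\<bar>/a) powr q + (1-t) * (\<bar>v i\<bar>/b) powr q)"
        using 3 t q by (intro mult_left_mono convex_pow_nonneg) auto
      finally show ?thesis using 3 by (simp add: powr_divide)
    qed
    have "(\<Sum>i<K. \<bar>u i + v i\<bar> powr q) \<le> (\<Sum>i<K. (a+b) powr q * (t * (\<bar>u i\<bar> powr q / a powr q) + (1-t) * (\<bar>v i\<bar> powr q / b powr q)))"
      by (intro sum_mono key)
    also have "\<dots> = (a+b) powr q * (t * ((\<Sum>i<K. \<bar>u i\<bar> powr q) / a powr q) + (1-t) * ((\<Sum>i<K. \<bar>v i\<bar> powr q) / b powr q))"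
      by (simp add: sum_distrib_left sum_divide_distrib sum.distrib algebra_simps)
    also have "\<dots> = (a+b) powr q" using 3 sa sb by simp
    finally have "(\<Sum>i<K. \<bar>u i + v i\<bar> powr q) powr (1/q) \<le> ((a+b) powr q) powr (1/q)"
      using q0 by (intro powr_mono2) (auto simp: sum_nonneg)
    then show ?thesis using 3 q0 unfolding Fq_alt[OF fs_add[OF u v] q0] a_def b_def
      by (simp add: powr_powr)
  qed
qed


definition Si :: "(nat \<Rightarrow> real) \<Rightarrow> real" where
  "Si z = (SUP i. \<bar>z i\<bar>)"

abbreviation bd :: "(nat \<Rightarrow> real) \<Rightarrow> bool" where
  "bd z \<equiv> bdd_above (range (\<lambda>i. \<bar>z i\<bar>))"

lemma fs_bd: assumes "fs K z" shows "bd z"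
proof -
  have "range (\<lambda>i. \<bar>z i\<bar>) \<subseteq> (\<lambda>i. \<bar>z i\<bar>) ` {..K}"
  proof
    fix y assume "y \<in> range (\<lambda>i. \<bar>z i\<bar>)"
    then obtain i where y: "y = \<bar>z i\<bar>" by auto
    show "y \<in> (\<lambda>i. \<bar>z i\<bar>) ` {..K}"
    proof (cases "i \<le> K")
      case True then show ?thesis using y by auto
    next
      case False then have "y = \<bar>z K\<bar>" using y assms by (simp add: fs_def)
      then show ?thesis by auto
    qed
  qed
  then show ?thesis by (meson bdd_above_mono finite_atMost finite_imageI bdd_above_finite)
qed

lemma Si_coord: "bd z \<Longrightarrow> \<bar>z i\<bar> \<le> Si z"
  unfolding Si_def by (rule cSUP_upper) auto

lemma Si_nonneg: "bd z \<Longrightarrow> 0 \<le> Si z"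
  using Si_coord[of z 0] by simp

lemma Si_le: assumes "\<And>i. \<bar>u i\<bar> \<le> C" shows "Si u \<le> C"
  unfolding Si_def by (rule cSUP_least) (use assms in auto)

lemma Si_mono: assumes "bd v" "\<And>i. \<bar>u i\<bar> \<le> \<bar>v i\<bar>" shows "Si u \<le> Si v"
proof (rule Si_le)
  fix i show "\<bar>u i\<bar> \<le> Si v" using assms(2)[of i] Si_coord[OF assms(1), of i] by linarith
qed

lemma Si_tri: assumes "bd u" "bd v" shows "Si (\<lambda>i. u i + v i) \<le> Si u + Si v"
proof (rule Si_le)
  fix i show "\<bar>u i + v i\<bar> \<le> Si u + Si v"
    using Si_coord[of u i] Si_coord[of v i] assms abs_triangle_ineq[of "u i" "v i"] by linarith
qed

lemma Si_scale: assumes "bd z" shows "Si (\<lambda>i. c * z i) = \<bar>c\<bar> * Si z"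
proof (cases "c = 0")
  case True then show ?thesis by (simp add: Si_def)
next
  case False
  have "Si (\<lambda>i. c * z i) \<le> \<bar>c\<bar> * Si z"
    by (rule Si_le) (use Si_coord[OF assms] in \<open>auto simp: abs_mult intro: mult_left_mono\<close>)
  moreover have "Si z \<le> Si (\<lambda>i. c * z i) / \<bar>c\<bar>"
  proof (rule Si_le)
    fix i
    have "bd (\<lambda>i. c * z i)"
    proof -
      obtain M where "\<And>i. \<bar>z i\<bar> \<le> M" using assms by (auto simp: bdd_above_def)
      then have "\<And>i. \<bar>c * z i\<bar> \<le> \<bar>c\<bar> * M" by (simp add: abs_mult mult_left_mono)
      then show ?thesis by (auto simp: bdd_above_def)
    qed
    then have "\<bar>c * z i\<bar> \<le> Si (\<lambda>i. c * z i)" by (rule Si_coord)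
    then show "\<bar>z i\<bar> \<le> Si (\<lambda>i. c * z i) / \<bar>c\<bar>" using False by (simp add: abs_mult field_simps)
  qed
  ultimately show ?thesis using False by (simp add: field_simps)
qed




lemma lp_cases:
  assumes "1 \<le> p"
  obtains "p = \<infinity>" "lp_norm p = Si" "in_lp p = (\<lambda>z. bounded (range z))"
  | q where "q \<ge> 1" "p = ereal q" "lp_norm p = Fq q" "in_lp p = (\<lambda>z. summable (\<lambda>i. \<bar>z i\<bar> powr q))"
proof (cases p)
  case (real r)
  then have "r \<ge> 1" using assms by simp
  then show ?thesis using that(2)[of r] real by (auto simp: fun_eq_iff lp_norm_def in_lp_def Fq_def)
next
  case PInf
  then show ?thesis using that(1) by (auto simp: fun_eq_iff lp_norm_def in_lp_def Si_def)
next
  case MInf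
  then show ?thesis using assms by simp
qed

context
  fixes p :: ereal assumes p1: "1 \<le> p"
begin

lemma lp_nonneg: "fs K z \<Longrightarrow> 0 \<le> lp_norm p z"
  by (cases rule: lp_cases[OF p1]) (auto simp: Fq_nonneg Si_nonneg fs_bd)

lemma lp_coord: "fs K z \<Longrightarrow> \<bar>z i\<bar> \<le> lp_norm p z"
  by (cases rule: lp_cases[OF p1]) (auto simp: Fq_coord Si_coord fs_bd)

lemma lp_mono: "fs K v \<Longrightarrow> (\<And>i. \<bar>u i\<bar> \<le> \<bar>v i\<bar>) \<Longrightarrow> lp_norm p u \<le> lp_norm p v"
  by (cases rule: lp_cases[OF p1]) (auto intro: Fq_mono Si_mono fs_bd)

lemma lp_scale: "fs K z \<Longrightarrow> lp_norm p (\<lambda>i. c * z i) = \<bar>c\<bar> * lp_norm p z"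
  by (cases rule: lp_cases[OF p1]) (auto simp: Fq_scale Si_scale fs_bd)

lemma lp_tri: "fs K u \<Longrightarrow> fs K v \<Longrightarrow> lp_norm p (\<lambda>i. u i + v i) \<le> lp_norm p u + lp_norm p v"
  by (cases rule: lp_cases[OF p1]) (auto intro: Fq_tri Si_tri fs_bd)

lemma lp_zero: "lp_norm p (\<lambda>i. 0) = 0"
  using lp_scale[of 0 "\<lambda>i. 0" 0] by (simp add: fs_def)

lemma in_lp_fs: assumes "fs K z" shows "in_lp p z"
proof (cases rule: lp_cases[OF p1])
  case 1
  obtain M where "\<And>i. \<bar>z i\<bar> \<le> M" using fs_bd[OF assms] by (auto simp: bdd_above_def)
  then show ?thesis using 1 by (auto simp: bounded_iff)
next
  case (2 q)
  then show ?thesis using fs_summable[OF assms] by simp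
qed

lemma in_lp_diff: assumes "in_lp p u" "in_lp p v" shows "in_lp p (\<lambda>i. u i - v i)"
proof (cases rule: lp_cases[OF p1])
  case 1
  obtain M where M: "\<And>i. \<bar>u i\<bar> \<le> M" using assms 1 by (auto simp: bounded_iff)
  obtain N where N: "\<And>i. \<bar>v i\<bar> \<le> N" using assms 1 by (auto simp: bounded_iff)
  have "\<bar>u i - v i\<bar> \<le> M + N" for i using M[of i] N[of i] by linarith
  then show ?thesis using 1 by (auto simp: bounded_iff)
next
  case (2 q)
  have cmp: "\<bar>u i - v i\<bar> powr q \<le> 2 powr q * (\<bar>u i\<bar> powr q + \<bar>v i\<bar> powr q)" for i
  proof -
    have "\<bar>u i - v i\<bar> powr q \<le> (2 * max \<bar>u i\<bar> \<bar>v i\<bar>) powr q"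
      using 2 by (intro powr_mono2) auto
    also have "\<dots> = 2 powr q * max \<bar>u i\<bar> \<bar>v i\<bar> powr q" by (rule powr_mult)
    also have "max \<bar>u i\<bar> \<bar>v i\<bar> powr q \<le> \<bar>u i\<bar> powr q + \<bar>v i\<bar> powr q"
      by (cases "\<bar>u i\<bar> \<le> \<bar>v i\<bar>") (auto simp: max_def)
    finally show ?thesis by simp
  qed
  have sm: "summable (\<lambda>i. 2 powr q * (\<bar>u i\<bar> powr q + \<bar>v i\<bar> powr q))"
    using assms 2 by (intro summable_mult summable_add) auto
  have "summable (\<lambda>i. \<bar>u i - v i\<bar> powr q)"
    by (rule summable_comparison_test'[OF sm, where N=0]) (use cmp in auto)
  then show ?thesis using 2 by simp
qed

lemma lp_limit:
  assumes lim: "\<And>i. (\<lambda>j. g j i) \<longlonglongrightarrow> e i"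
    and gfs: "\<And>j. \<exists>K. fs K (g j)"
    and bnd: "\<And>j. lp_norm p (g j) \<le> T"
  shows "in_lp p e \<and> lp_norm p e \<le> T \<and> 0 \<le> lp_norm p e"
proof -
  have T0: "0 \<le> T" using gfs[of 0] bnd[of 0] lp_nonneg by (meson order_trans)
  show ?thesis
  proof (cases rule: lp_cases[OF p1])
    case 1
    have co: "\<bar>e i\<bar> \<le> T" for i
    proof (rule tendsto_le[OF _ tendsto_const])
      show "(\<lambda>j. \<bar>g j i\<bar>) \<longlonglongrightarrow> \<bar>e i\<bar>" using lim by (intro tendsto_intros)
      show "\<forall>\<^sub>F j in sequentially. \<bar>g j i\<bar> \<le> T"
        using gfs bnd lp_coord by (meson always_eventually order_trans)
    qed simp
    then have "bounded (range e)" by (auto simp: bounded_iff)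
    moreover have "bd e" using co by (auto simp: bdd_above_def)
    ultimately show ?thesis using 1 co Si_le Si_nonneg by auto
  next
    case (2 q)
    have q0: "q > 0" using 2 by simp
    have part: "(\<Sum>i<K. \<bar>e i\<bar> powr q) \<le> T powr q" for K
    proof (rule tendsto_le[OF _ tendsto_const])
      show "(\<lambda>j. \<Sum>i<K. \<bar>g j i\<bar> powr q) \<longlonglongrightarrow> (\<Sum>i<K. \<bar>e i\<bar> powr q)"
        using lim q0 by (intro tendsto_intros) auto
      show "\<forall>\<^sub>F j in sequentially. (\<Sum>i<K. \<bar>g j i\<bar> powr q) \<le> T powr q"
      proof (rule always_eventually, rule allI)
        fix j
        obtain L where L: "fs L (g j)" using gfs by blast
        have "(\<Sum>i<K. \<bar>g j i\<bar> powr q) \<le> (\<Sum>i. \<bar>g j i\<bar> powr q)"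
          using fs_summable[OF L q0] by (intro sum_le_suminf) auto
        also have "\<dots> = Fq q (g j) powr q"
          using q0 by (simp add: Fq_def powr_powr suminf_nonneg[OF fs_summable[OF L q0]])
        also have "\<dots> \<le> T powr q" using bnd[of j] 2 q0 by (intro powr_mono2) (auto simp: Fq_nonneg)
        finally show "(\<Sum>i<K. \<bar>g j i\<bar> powr q) \<le> T powr q" .
      qed
    qed simp
    have sm: "summable (\<lambda>i. \<bar>e i\<bar> powr q)"
    proof (rule bounded_imp_summable[where B="T powr q"])
      fix n show "(\<Sum>k\<le>n. \<bar>e k\<bar> powr q) \<le> T powr q"
        using part[of "Suc n"] by (simp add: lessThan_Suc_atMost)
    qed simp
    have "(\<Sum>i. \<bar>e i\<bar> powr q) \<le> T powr q" using sm part by (intro suminf_le_const)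
    then have "(\<Sum>i. \<bar>e i\<bar> powr q) powr (1/q) \<le> (T powr q) powr (1/q)"
      using q0 sm by (intro powr_mono2) (auto intro: suminf_nonneg)
    then have "Fq q e \<le> T" using q0 T0 by (simp add: Fq_def powr_powr)
    then show ?thesis using 2 sm Fq_nonneg by auto
  qed
qed

end




lemma matvec_scale: "matvec m k P (\<lambda>i. c * y i) = (\<lambda>i. c * matvec m k P y i)"
  by (auto simp: matvec_def fun_eq_iff sum_distrib_left algebra_simps)

lemma matvec_zero: "matvec m k P (\<lambda>i. 0) = (\<lambda>i. 0)"
  by (auto simp: matvec_def fun_eq_iff)

lemma fs_matvec: "fs m (matvec m k P y)" by (simp add: fs_def matvec_def)

context
  fixes p :: ereal assumes p1: "1 \<le> p"
begin

lemma op_bdd: "bdd_above {lp_norm p (matvec m k P y) | y. (\<forall>i\<ge>k. y i = 0) \<and> lp_norm p y \<le> 1}"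
proof -
  define w where "w = (\<lambda>i. if i < m then (\<Sum>j<k. \<bar>P i j\<bar>) else (0::real))"
  have fw: "fs m w" by (simp add: fs_def w_def)
  show ?thesis unfolding bdd_above_def
  proof (intro exI[of _ "lp_norm p w"] ballI)
    fix z assume "z \<in> {lp_norm p (matvec m k P y) | y. (\<forall>i\<ge>k. y i = 0) \<and> lp_norm p y \<le> 1}"
    then obtain y where z: "z = lp_norm p (matvec m k P y)" and y: "fs k y" "lp_norm p y \<le> 1"
      by (auto simp: fs_def)
    have yc: "\<bar>y j\<bar> \<le> 1" for j using lp_coord[OF p1 y(1), of j] y(2) by linarith
    have "\<bar>matvec m k P y i\<bar> \<le> \<bar>w i\<bar>" for i
    proof (cases "i < m")
      case True
      have "\<bar>\<Sum>j<k. P i j * y j\<bar> \<le> (\<Sum>j<k. \<bar>P i j * y j\<bar>)" by (rule sum_abs)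
      also have "\<dots> \<le> (\<Sum>j<k. \<bar>P i j\<bar>)"
        using yc by (intro sum_mono) (auto simp: abs_mult intro: mult_left_le)
      finally show ?thesis using True by (simp add: matvec_def w_def)
    qed (simp add: matvec_def w_def)
    then show "z \<le> lp_norm p w" unfolding z by (rule lp_mono[OF p1 fw])
  qed
qed

lemma op_nonneg: "0 \<le> op_norm p m k P"
  unfolding op_norm_def
proof (rule cSup_upper2[OF _ _ op_bdd])
  show "lp_norm p (matvec m k P (\<lambda>i. 0)) \<in> {lp_norm p (matvec m k P y) | y. (\<forall>i\<ge>k. y i = 0) \<and> lp_norm p y \<le> 1}"
    using lp_zero[OF p1] by auto
  show "0 \<le> lp_norm p (matvec m k P (\<lambda>i. 0))" using lp_zero[OF p1] by (simp add: matvec_zero)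
qed

lemma op_bound:
  assumes v: "fs k v"
  shows "lp_norm p (matvec m k P v) \<le> op_norm p m k P * lp_norm p v"
proof (cases "lp_norm p v = 0")
  case True
  then have "v = (\<lambda>i. 0)" using lp_coord[OF p1 v] by (auto simp: fun_eq_iff)
  then show ?thesis using True lp_zero[OF p1] by (simp add: matvec_zero)
next
  case False
  define c where "c = lp_norm p v"
  have c: "c > 0" using False lp_nonneg[OF p1 v] c_def by simp
  define y where "y = (\<lambda>i. (1/c) * v i)"
  have fy: "fs k y" using v by (simp add: y_def fs_def)
  have ny: "lp_norm p y = 1" using c lp_scale[OF p1 v, of "1/c"] by (simp add: y_def c_def)
  have vy: "v = (\<lambda>i. c * y i)" using c by (simp add: y_def fun_eq_iff)
  have "lp_norm p (matvec m k P y) \<le> op_norm p m k P"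
    unfolding op_norm_def
    by (rule cSup_upper[OF _ op_bdd]) (use fy ny in \<open>auto simp: fs_def\<close>)
  moreover have "lp_norm p (matvec m k P v) = c * lp_norm p (matvec m k P y)"
    unfolding vy matvec_scale using lp_scale[OF p1 fs_matvec, of c] c by simp
  ultimately show ?thesis using c c_def by (simp add: mult.commute)
qed

end




theorem theorem5p2:
  fixes p :: ereal and d :: nat and m :: "nat \<Rightarrow> nat"
    and W P :: "nat \<Rightarrow> nat \<Rightarrow> nat \<Rightarrow> real" and b :: "nat \<Rightarrow> nat \<Rightarrow> real"
    and x :: "nat \<Rightarrow> real"
  assumes p: "1 \<le> p"
    and m0: "m 0 = d"
    and mpos: "\<And>n. n \<ge> 1 \<Longrightarrow> 0 < m n"
    and mmono: "\<And>n. n \<ge> 1 \<Longrightarrow> m n \<le> m (Suc n)"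
    and WP: "\<And>n i j. n \<ge> 1 \<Longrightarrow> i < m n \<Longrightarrow> j < m (n - 1) \<Longrightarrow>
               W n i j = (if i = j then 1 else 0) + P n i j"
    and Psum: "summable (\<lambda>n. op_norm p (m (Suc n)) (m n) (P (Suc n)))"
    and bsum: "summable (\<lambda>n. lp_norm p (trunc (m (Suc n)) (b (Suc n))))"
    and x01: "\<And>i. i < d \<Longrightarrow> 0 \<le> x i \<and> x i \<le> 1"
    and x0: "\<And>i. i \<ge> d \<Longrightarrow> x i = 0"
  shows "\<exists>y. in_lp p y \<and> (\<lambda>n. lp_norm p (\<lambda>i. net m W b x n i - y i)) \<longlonglongrightarrow> 0"
proof -
  define N where "N = net m W b x"
  have Nsuc: "N (Suc n) = relu_layer (m (Suc n)) (m n) (W (Suc n)) (b (Suc n)) (N n)" for n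
    by (simp add: N_def)
  have N0: "N 0 = x" by (simp add: N_def)
  have Nfs: "fs (m n) (N n)" for n
    by (cases n) (auto simp: Nsuc N0 fs_def relu_layer_def x0 m0)
  have Nnn: "0 \<le> N n i" for n i
  proof (cases n)
    case 0 then show ?thesis using x01[of i] x0[of i] N0 by (cases "i < d") auto
  qed (auto simp: Nsuc relu_layer_def)
  have fsT: "fs (m (Suc k)) (trunc (m (Suc k)) (b (Suc k)))" for k by (simp add: fs_def trunc_def)
  have step: "\<bar>N (Suc n) i - N n i\<bar> \<le> \<bar>matvec (m (Suc n)) (m n) (P (Suc n)) (N n) i + trunc (m (Suc n)) (b (Suc n)) i\<bar>"
    if n1: "n \<ge> 1" for n i
  proof (cases "i < m (Suc n)")
    case True
    have "(\<Sum>j<m n. W (Suc n) i j * N n j) = (\<Sum>j<m n. (if i = j then N n j else 0) + P (Suc n) i j * N n j)"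
      using WP[of "Suc n" i] True by (intro sum.cong) (auto simp: algebra_simps)
    also have "\<dots> = (\<Sum>j<m n. if i = j then N n j else 0) + (\<Sum>j<m n. P (Suc n) i j * N n j)"
      by (rule sum.distrib)
    also have "(\<Sum>j<m n. if i = j then N n j else 0) = N n i"
      using Nfs[of n] by (cases "i < m n") (auto simp: fs_def)
    finally have sumW: "(\<Sum>j<m n. W (Suc n) i j * N n j) = N n i + (\<Sum>j<m n. P (Suc n) i j * N n j)" .
    have "N (Suc n) i = max (N n i + (matvec (m (Suc n)) (m n) (P (Suc n)) (N n) i + trunc (m (Suc n)) (b (Suc n)) i)) 0"
      using True by (simp add: Nsuc relu_layer_def matvec_def trunc_def sumW add.assoc)
    then show ?thesis using Nnn[of n i] by (simp add: max_def abs_if)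
  next
    case False
    then have "i \<ge> m n" using mmono[OF n1] by simp
    then show ?thesis using False Nfs[of n] by (simp add: Nsuc relu_layer_def fs_def)
  qed
  define a where "a k = op_norm p (m (Suc k)) (m k) (P (Suc k))" for k
  define \<beta> where "\<beta> k = lp_norm p (trunc (m (Suc k)) (b (Suc k)))" for k
  define u where "u n = lp_norm p (N n)" for n
  define \<delta> where "\<delta> n = lp_norm p (\<lambda>i. N (Suc n) i - N n i)" for n
  have a0: "0 \<le> a k" for k by (simp add: a_def op_nonneg[OF p])
  have b0: "0 \<le> \<beta> k" for k unfolding \<beta>_def by (rule lp_nonneg[OF p fsT])
  have u0: "0 \<le> u k" for k unfolding u_def by (rule lp_nonneg[OF p Nfs])
  have fsD: "fs (m n + m (Suc n)) (\<lambda>i. N (Suc n) i - N n i)" for n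
    by (intro fs_diff fs_mono[OF Nfs]) auto
  have d0: "0 \<le> \<delta> k" for k unfolding \<delta>_def by (rule lp_nonneg[OF p fsD])
  have asum: "summable a" using Psum unfolding a_def[abs_def] .
  have bsum': "summable \<beta>" using bsum unfolding \<beta>_def[abs_def] .
  have dbound: "\<delta> n \<le> a n * u n + \<beta> n" if n1: "n \<ge> 1" for n
  proof -
    have "\<delta> n \<le> lp_norm p (\<lambda>i. matvec (m (Suc n)) (m n) (P (Suc n)) (N n) i + trunc (m (Suc n)) (b (Suc n)) i)"
      unfolding \<delta>_def by (rule lp_mono[OF p fs_add[OF fs_matvec fsT]]) (rule step[OF n1])
    also have "\<dots> \<le> lp_norm p (matvec (m (Suc n)) (m n) (P (Suc n)) (N n)) + \<beta> n"
      unfolding \<beta>_def by (rule lp_tri[OF p fs_matvec fsT])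
    also have "\<dots> \<le> a n * u n + \<beta> n"
      unfolding a_def u_def using op_bound[OF p Nfs] by simp
    finally show ?thesis .
  qed
  have urec: "u (Suc n) \<le> u n + \<delta> n" for n
  proof -
    have e: "N (Suc n) = (\<lambda>i. N n i + (N (Suc n) i - N n i))" by auto
    show ?thesis unfolding u_def \<delta>_def
      by (subst e, rule lp_tri[OF p fs_mono[OF Nfs] fsD]) simp
  qed
  define Cn where "Cn n = exp (\<Sum>k<n. a k) * (u 1 + (\<Sum>k<n. \<beta> k))" for n
  have ub: "n \<ge> 1 \<Longrightarrow> u n \<le> Cn n" for n
  proof (induction n)
    case 0 then show ?case by simp
  next
    case (Suc n)
    show ?case
    proof (cases "n = 0")
      case True
      have "1 * u 1 \<le> exp (a 0) * (u 1 + \<beta> 0)"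
        using a0[of 0] b0[of 0] u0[of 1] by (intro mult_mono) auto
      then show ?thesis using True by (simp add: Cn_def)
    next
      case False
      then have n1: "n \<ge> 1" by simp
      have IH: "u n \<le> Cn n" using Suc.IH n1 by simp
      define S where "S = (\<Sum>k<n. a k)"
      define S' where "S' = (\<Sum>k<n. \<beta> k)"
      have S0: "0 \<le> S" unfolding S_def using a0 by (simp add: sum_nonneg)
      have S'0: "0 \<le> S'" unfolding S'_def using b0 by (simp add: sum_nonneg)
      have "u (Suc n) \<le> (1 + a n) * u n + \<beta> n" using urec[of n] dbound[OF n1] by (simp add: algebra_simps)
      also have "\<dots> \<le> exp (a n) * Cn n + \<beta> n"
        using IH a0[of n] u0[of n] exp_ge_add_one_self[of "a n"]
        by (intro add_mono mult_mono) auto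
      also have "\<beta> n \<le> exp (S + a n) * \<beta> n"
      proof -
        have "1 \<le> exp (S + a n)" using S0 a0[of n] by simp
        then have "1 * \<beta> n \<le> exp (S + a n) * \<beta> n" using b0[of n] by (rule mult_right_mono)
        then show ?thesis by simp
      qed
      also have "exp (a n) * Cn n + exp (S + a n) * \<beta> n = Cn (Suc n)"
        by (simp add: Cn_def S_def exp_add algebra_simps)
      finally show ?thesis by simp
    qed
  qed
  define M where "M = exp (suminf a) * (u 1 + suminf \<beta>)"
  have uM: "u n \<le> M" if "n \<ge> 1" for n
  proof -
    have "Cn n \<le> M" unfolding Cn_def M_def
    proof (intro mult_mono add_left_mono)
      show "exp (\<Sum>k<n. a k) \<le> exp (suminf a)" using sum_le_suminf[OF asum, of "{..<n}"] a0 by simp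
      show "(\<Sum>k<n. \<beta> k) \<le> suminf \<beta>" using sum_le_suminf[OF bsum', of "{..<n}"] b0 by simp
      show "0 \<le> u 1 + (\<Sum>k<n. \<beta> k)" using u0 b0 by (simp add: sum_nonneg)
    qed simp
    then show ?thesis using ub[OF that] by simp
  qed
  have dsum: "summable \<delta>"
  proof (rule summable_comparison_test'[where N=1])
    show "summable (\<lambda>n. a n * M + \<beta> n)" using asum bsum' by (intro summable_add summable_mult2)
    fix n :: nat assume n1: "n \<ge> 1"
    have "\<delta> n \<le> a n * M + \<beta> n"
      using dbound[OF n1] mult_left_mono[OF uM[OF n1] a0[of n]] by simp
    then show "norm (\<delta> n) \<le> a n * M + \<beta> n" using d0[of n] by simp
  qed
  have tele: "lp_norm p (\<lambda>i. N (j + n) i - N n i) \<le> (\<Sum>k<j. \<delta> (k + n))" for j n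
  proof (induction j)
    case 0 then show ?case by (simp add: lp_zero[OF p])
  next
    case (Suc j)
    have e: "(\<lambda>i. N (Suc j + n) i - N n i) = (\<lambda>i. (N (Suc (j + n)) i - N (j + n) i) + (N (j + n) i - N n i))"
      by auto
    have "lp_norm p (\<lambda>i. N (Suc j + n) i - N n i) \<le> \<delta> (j + n) + lp_norm p (\<lambda>i. N (j + n) i - N n i)"
      unfolding e \<delta>_def
      by (rule lp_tri[OF p, of "m (j+n) + m (Suc (j + n)) + m n"]; intro fs_diff fs_mono[OF Nfs]; simp)
    then show ?case using Suc.IH by simp
  qed
  have tele': "lp_norm p (\<lambda>i. N n i - N (j + n) i) = lp_norm p (\<lambda>i. N (j + n) i - N n i)" for j n
  proof -
    have fs1: "fs (m (j+n) + m n) (\<lambda>i. N (j + n) i - N n i)" by (intro fs_diff fs_mono[OF Nfs]) auto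
    have "(\<lambda>i. N n i - N (j + n) i) = (\<lambda>i. (-1) * (N (j + n) i - N n i))" by auto
    then show ?thesis using lp_scale[OF p fs1, of "-1"] by simp
  qed
  define T where "T n = (\<Sum>k. \<delta> (k + n))" for n
  have sT: "(\<Sum>k<j. \<delta> (k + n)) \<le> T n" for j n
    unfolding T_def by (rule sum_le_suminf) (use summable_ignore_initial_segment[OF dsum] d0 in auto)
  have T0: "T \<longlonglongrightarrow> 0"
  proof -
    have "T = (\<lambda>n. suminf \<delta> - (\<Sum>i<n. \<delta> i))"
    proof (rule ext)
      fix n show "T n = suminf \<delta> - (\<Sum>i<n. \<delta> i)"
        using suminf_split_initial_segment[OF dsum, of n] unfolding T_def by linarith
    qed
    moreover have "(\<lambda>n. suminf \<delta> - (\<Sum>i<n. \<delta> i)) \<longlonglongrightarrow> suminf \<delta> - suminf \<delta>"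
      by (intro tendsto_diff tendsto_const summable_LIMSEQ dsum)
    ultimately show ?thesis by simp
  qed
  have cs: "summable (\<lambda>k. N (Suc k) i - N k i)" for i
  proof (rule summable_comparison_test'[OF dsum, where N=0])
    fix k :: nat
    show "norm (N (Suc k) i - N k i) \<le> \<delta> k" unfolding \<delta>_def using lp_coord[OF p fsD, of k i] by simp
  qed
  define y where "y i = x i + (\<Sum>k. N (Suc k) i - N k i)" for i
  have Ny: "(\<lambda>j. N j i) \<longlonglongrightarrow> y i" for i
  proof -
    have e: "(\<lambda>j. N j i) = (\<lambda>j. x i + (\<Sum>k<j. N (Suc k) i - N k i))"
    proof (rule ext)
      fix j show "N j i = x i + (\<Sum>k<j. N (Suc k) i - N k i)"
        using sum_lessThan_telescope[of "\<lambda>k. N k i" j] N0 by simp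
    qed
    show ?thesis unfolding e y_def by (intro tendsto_add tendsto_const summable_LIMSEQ cs)
  qed
  have lim: "in_lp p (\<lambda>i. N n i - y i) \<and> lp_norm p (\<lambda>i. N n i - y i) \<le> T n \<and> 0 \<le> lp_norm p (\<lambda>i. N n i - y i)" for n
  proof (rule lp_limit[OF p, where g="\<lambda>j i. N n i - N (j + n) i"])
    show "(\<lambda>j. N n i - N (j + n) i) \<longlonglongrightarrow> N n i - y i" for i
      by (intro tendsto_diff tendsto_const LIMSEQ_ignore_initial_segment Ny)
    show "\<exists>K. fs K (\<lambda>i. N n i - N (j + n) i)" for j
      by (rule exI[of _ "m n + m (j + n)"]) (intro fs_diff fs_mono[OF Nfs]; simp)
    show "lp_norm p (\<lambda>i. N n i - N (j + n) i) \<le> T n" for j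
      using tele'[of n j] tele[of j n] sT[where j=j and n=n] by simp
  qed
  have "in_lp p y"
  proof -
    have "in_lp p (\<lambda>i. N 0 i - (N 0 i - y i))"
      by (rule in_lp_diff[OF p in_lp_fs[OF p Nfs]]) (use lim[of 0] in simp)
    then show ?thesis by simp
  qed
  moreover have "(\<lambda>n. lp_norm p (\<lambda>i. N n i - y i)) \<longlonglongrightarrow> 0"
  proof (rule tendsto_sandwich[OF _ _ tendsto_const T0])
    show "\<forall>\<^sub>F n in sequentially. 0 \<le> lp_norm p (\<lambda>i. N n i - y i)" using lim by simp
    show "\<forall>\<^sub>F n in sequentially. lp_norm p (\<lambda>i. N n i - y i) \<le> T n" using lim by simp
  qed
  ultimately show ?thesis unfolding N_def by blast
qed


end
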